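(* Let $G$ be a torsion group and $M$ a finitely generated $\mathbb{B}[G]$-module. Then each orbit of the $G$-action on the poset of join-irreducible elements of $M$ forms an antichain; i.e. for each join-irreducible $v\in M$ and $g,h\in G$, $gv\le hv$ implies $gv=hv$.
   Context: $\mathbb{B}=\{0,1\}$ is the Boolean semifield with $1+1=1$; $\mathbb{B}[G]$ is the group semiring. A $\mathbb{B}$-module is partially ordered by $x\le y$ iff $x+y=y$ (sum is the join). An element $v$ is join-irreducible if $v\neq0$ and $v=a+b$ implies $v=a$ or $v=b$. A torsion group is one in which every element has finite order. *)

theory Defs
  imports "HOL-Algebra.Group"
begin

text \<open>A module over the group semiring B[G] (B the Boolean semifield) is a
commutative idempotent monoid (M, add, zero) -- idempotent since 1+1=1 in B --
together with an action of G by monoid endomorphisms; the action of a general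
element of B[G] (a finite subset of G) is the sum of the actions of its members.\<close>

definition BG_module ::
  "('g, 'b) monoid_scheme \<Rightarrow> 'm set \<Rightarrow> ('m \<Rightarrow> 'm \<Rightarrow> 'm) \<Rightarrow> 'm \<Rightarrow> ('g \<Rightarrow> 'm \<Rightarrow> 'm) \<Rightarrow> bool"
where
  "BG_module G M add zero act \<longleftrightarrow>
     group G \<and> zero \<in> M \<and>
     (\<forall>x\<in>M. \<forall>y\<in>M. add x y \<in> M) \<and>
     (\<forall>x\<in>M. \<forall>y\<in>M. \<forall>z\<in>M. add (add x y) z = add x (add y z)) \<and>
     (\<forall>x\<in>M. \<forall>y\<in>M. add x y = add y x) \<and>
     (\<forall>x\<in>M. add zero x = x) \<and>
     (\<forall>x\<in>M. add x x = x) \<and>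
     (\<forall>g\<in>carrier G. \<forall>x\<in>M. act g x \<in> M) \<and>
     (\<forall>x\<in>M. act \<one>\<^bsub>G\<^esub> x = x) \<and>
     (\<forall>g\<in>carrier G. \<forall>h\<in>carrier G. \<forall>x\<in>M. act (g \<otimes>\<^bsub>G\<^esub> h) x = act g (act h x)) \<and>
     (\<forall>g\<in>carrier G. \<forall>x\<in>M. \<forall>y\<in>M. act g (add x y) = add (act g x) (act g y)) \<and>
     (\<forall>g\<in>carrier G. act g zero = zero)"

inductive_set BG_span ::
  "('g, 'b) monoid_scheme \<Rightarrow> ('m \<Rightarrow> 'm \<Rightarrow> 'm) \<Rightarrow> 'm \<Rightarrow> ('g \<Rightarrow> 'm \<Rightarrow> 'm) \<Rightarrow> 'm set \<Rightarrow> 'm set"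
  for G add zero act S
where
  span_zero: "zero \<in> BG_span G add zero act S"
| span_gen: "\<lbrakk>g \<in> carrier G; s \<in> S\<rbrakk> \<Longrightarrow> act g s \<in> BG_span G add zero act S"
| span_add: "\<lbrakk>x \<in> BG_span G add zero act S; y \<in> BG_span G add zero act S\<rbrakk>
               \<Longrightarrow> add x y \<in> BG_span G add zero act S"

definition BG_fin_gen ::
  "('g, 'b) monoid_scheme \<Rightarrow> 'm set \<Rightarrow> ('m \<Rightarrow> 'm \<Rightarrow> 'm) \<Rightarrow> 'm \<Rightarrow> ('g \<Rightarrow> 'm \<Rightarrow> 'm) \<Rightarrow> bool"
where
  "BG_fin_gen G M add zero act \<longleftrightarrow>
     (\<exists>S. finite S \<and> S \<subseteq> M \<and> M \<subseteq> BG_span G add zero act S)"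

definition torsion_group :: "('g, 'b) monoid_scheme \<Rightarrow> bool" where
  "torsion_group G \<longleftrightarrow> group G \<and> (\<forall>g\<in>carrier G. \<exists>n::nat. n > 0 \<and> g [^]\<^bsub>G\<^esub> n = \<one>\<^bsub>G\<^esub>)"

definition BG_le :: "('m \<Rightarrow> 'm \<Rightarrow> 'm) \<Rightarrow> 'm \<Rightarrow> 'm \<Rightarrow> bool" where
  "BG_le add x y \<longleftrightarrow> add x y = y"

definition join_irreducible :: "'m set \<Rightarrow> ('m \<Rightarrow> 'm \<Rightarrow> 'm) \<Rightarrow> 'm \<Rightarrow> 'm \<Rightarrow> bool" where
  "join_irreducible M add zero v \<longleftrightarrow>
     v \<in> M \<and> v \<noteq> zero \<and> (\<forall>a\<in>M. \<forall>b\<in>M. v = add a b \<longrightarrow> v = a \<or> v = b)"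

end

theory Submission
  imports Defs
begin

theorem lemma4p11:
  fixes G :: "('g, 'b) monoid_scheme" and M :: "'m set"
    and add :: "'m \<Rightarrow> 'm \<Rightarrow> 'm" and zero :: 'm and act :: "'g \<Rightarrow> 'm \<Rightarrow> 'm"
  assumes "torsion_group G"
    and "BG_module G M add zero act"
    and "BG_fin_gen G M add zero act"
    and "join_irreducible M add zero v"
    and "g \<in> carrier G" and "h \<in> carrier G"
    and "BG_le add (act g v) (act h v)"
  shows "act g v = act h v"
proof -
  have grp: "group G" using assms(1) unfolding torsion_group_def by blast
  interpret group G by (rule grp)
  note mod = assms(2)[unfolded BG_module_def]
  have vM: "v \<in> M" using assms(4) unfolding join_irreducible_def by blast
  have closed: "\<And>a x. a \<in> carrier G \<Longrightarrow> x \<in> M \<Longrightarrow> act a x \<in> M" using mod by blast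
  have one: "\<And>x. x \<in> M \<Longrightarrow> act \<one>\<^bsub>G\<^esub> x = x" using mod by blast
  have mul: "\<And>a b x. a \<in> carrier G \<Longrightarrow> b \<in> carrier G \<Longrightarrow> x \<in> M \<Longrightarrow> act (a \<otimes>\<^bsub>G\<^esub> b) x = act a (act b x)"
    using mod by blast
  have dist: "\<And>a x y. a \<in> carrier G \<Longrightarrow> x \<in> M \<Longrightarrow> y \<in> M \<Longrightarrow> act a (add x y) = add (act a x) (act a y)"
    using mod by blast
  have assoc: "\<And>x y z. x \<in> M \<Longrightarrow> y \<in> M \<Longrightarrow> z \<in> M \<Longrightarrow> add (add x y) z = add x (add y z)" using mod by blast
  have comm: "\<And>x y. x \<in> M \<Longrightarrow> y \<in> M \<Longrightarrow> add x y = add y x" using mod by blast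
  have idem: "\<And>x. x \<in> M \<Longrightarrow> add x x = x" using mod by blast
  have trans: "\<And>x y z. x \<in> M \<Longrightarrow> y \<in> M \<Longrightarrow> z \<in> M \<Longrightarrow> add x y = y \<Longrightarrow> add y z = z \<Longrightarrow> add x z = z"
    by (metis assoc)
  have mono: "\<And>a x y. a \<in> carrier G \<Longrightarrow> x \<in> M \<Longrightarrow> y \<in> M \<Longrightarrow> add x y = y \<Longrightarrow> add (act a x) (act a y) = act a y"
    by (metis dist)
  define w where "w = inv\<^bsub>G\<^esub> g \<otimes>\<^bsub>G\<^esub> h"
  have wG: "w \<in> carrier G" using assms(5,6) w_def by simp
  have gw: "g \<otimes>\<^bsub>G\<^esub> w = h" using assms(5,6) w_def by (simp add: m_assoc[symmetric])
  have base: "add v (act w v) = act w v"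
  proof -
    have "add (act (inv\<^bsub>G\<^esub> g) (act g v)) (act (inv\<^bsub>G\<^esub> g) (act h v)) = act (inv\<^bsub>G\<^esub> g) (act h v)"
      using mono[OF _ closed closed] assms(5,6,7) vM unfolding BG_le_def by simp
    moreover have "act (inv\<^bsub>G\<^esub> g) (act g v) = v" using mul[of "inv\<^bsub>G\<^esub> g" g v] assms(5) vM one by simp
    moreover have "act (inv\<^bsub>G\<^esub> g) (act h v) = act w v" using mul[of "inv\<^bsub>G\<^esub> g" h v] assms(5,6) vM w_def by simp
    ultimately show ?thesis by simp
  qed
  have step: "add v (act (w [^]\<^bsub>G\<^esub> (n::nat)) v) = act (w [^]\<^bsub>G\<^esub> n) v" for n
    proof (induction n)
      case 0 then show ?case using one vM idem by simp
    next
      case (Suc n)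
      have "add (act w v) (act w (act (w [^]\<^bsub>G\<^esub> n) v)) = act w (act (w [^]\<^bsub>G\<^esub> n) v)"
        using mono[OF wG vM closed[OF nat_pow_closed[OF wG] vM] Suc.IH] .
      moreover have "act w (act (w [^]\<^bsub>G\<^esub> n) v) = act (w [^]\<^bsub>G\<^esub> Suc n) v"
        using mul[OF wG nat_pow_closed[OF wG] vM] nat_pow_Suc2[OF wG] by (simp del: nat_pow_Suc)
      ultimately have "add (act w v) (act (w [^]\<^bsub>G\<^esub> Suc n) v) = act (w [^]\<^bsub>G\<^esub> Suc n) v" by (simp del: nat_pow_Suc)
      then show ?case by (rule trans[OF vM closed[OF wG vM] closed[OF nat_pow_closed[OF wG] vM] base])
    qed
  obtain n :: nat where n: "n > 0" "w [^]\<^bsub>G\<^esub> n = \<one>\<^bsub>G\<^esub>" using assms(1) wG unfolding torsion_group_def by blast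
  then obtain m where m: "n = Suc m" by (cases n) auto
  have "add (act w v) (act w (act (w [^]\<^bsub>G\<^esub> m) v)) = act w (act (w [^]\<^bsub>G\<^esub> m) v)"
    using mono[OF wG vM closed[OF nat_pow_closed[OF wG] vM] step[of m]] .
  moreover have "act w (act (w [^]\<^bsub>G\<^esub> m) v) = v"
    proof -
    have "w \<otimes>\<^bsub>G\<^esub> w [^]\<^bsub>G\<^esub> m = \<one>\<^bsub>G\<^esub>" using nat_pow_Suc2[OF wG, of m] m n by simp
    then show ?thesis using mul[OF wG nat_pow_closed[OF wG] vM, of m] one[OF vM] by simp
  qed
  ultimately have "add (act w v) v = v" by simp
  then have wv: "act w v = v" using base comm[OF vM closed[OF wG vM]] by simp
  have "act h v = act g (act w v)" using mul[OF assms(5) wG vM] gw by simp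
  then show ?thesis using wv by simp
qed

end
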